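(* Let $X_n$ and $Y_n$ be random variables taking values in countable sets $\mathcal X_n$ and $\mathcal Y_n$, with pmfs $P_{X_n}$, $P_{Y_n}$. Let $\epsilon\in(0,1)$ and $\gamma>0$ satisfy $e^{-\gamma}\le\epsilon$. Define $$\mathcal E^n(\gamma)=\{\delta\in[0,1): c_n^x(\delta)-c_n^y(\delta)<\gamma\}.$$ Then there exists a (deterministic) map $\phi_n:\mathcal X_n\to\mathcal Y_n$ such that $$d\big(P_{Y_n},P_{\phi_n(X_n)}\big)\le 9\epsilon+10\,\mu(\mathcal E^n(\gamma)).$$
   Context: Logarithms are natural. For a random variable $Z$ on a countable set $\mathcal Z$ with pmf $P_Z$, list the elements of positive probability as $z_1,z_2,\dots$ (a finite or countably infinite list) with $P_Z(z_1)\ge P_Z(z_2)\ge\cdots$ (ties broken arbitrarily). Set $\delta_0=0$ and $\delta_k=\sum_{i\le k}P_Z(z_i)$. For $\delta\in[0,1)$ define $c^z(\delta)=\log\frac{1}{P_Z(z_k)}$, where $k$ is the unique index with $\delta\in[\delta_{k-1},\delta_k)$. This is a nonnegative, nondecreasing, right-continuous step function on $[0,1)$ that does not depend on the tie-breaking. Here $c_n^x$ and $c_n^y$ denote this function built from $P_{X_n}$ and from $P_{Y_n}$ respectively. The variational distance between pmfs $P,Q$ on a countable set is $d(P,Q)=\sum_a|P(a)-Q(a)|$ (no factor $1/2$). $\mu$ denotes Lebesgue measure on $\mathbb R$. *)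

theory Defs
  imports "HOL-Probability.Probability"
begin

text \<open>Index set of the (finite or countably infinite) list of elements of positive probability,
  indexed from 0.\<close>
definition pos_index :: "'a pmf \<Rightarrow> nat set" where
  "pos_index p = (if finite (set_pmf p) then {..<card (set_pmf p)} else UNIV)"

definition desc_enum :: "'a pmf \<Rightarrow> (nat \<Rightarrow> 'a) \<Rightarrow> bool" where
  "desc_enum p z \<longleftrightarrow> bij_betw z (pos_index p) (set_pmf p) \<and>
     (\<forall>i\<in>pos_index p. \<forall>j\<in>pos_index p. i \<le> j \<longrightarrow> pmf p (z j) \<le> pmf p (z i))"

text \<open>The function c^z: with delta_k = sum_{i<k} P(z_i) (0-based), c(delta) = log(1/P(z_k))
  where k is the unique index with delta_k \<le> delta < delta_(k+1). The listing is chosen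
  arbitrarily among nonincreasing listings (the value does not depend on tie-breaking).\<close>
definition cfun :: "'a pmf \<Rightarrow> real \<Rightarrow> real" where
  "cfun p \<delta> = (let z = (SOME z. desc_enum p z);
       k = (THE k. k \<in> pos_index p \<and> (\<Sum>i<k. pmf p (z i)) \<le> \<delta> \<and> \<delta> < (\<Sum>i<Suc k. pmf p (z i)))
     in ln (1 / pmf p (z k)))"

text \<open>Variational distance without the factor 1/2.\<close>
definition vdist :: "'a pmf \<Rightarrow> 'a pmf \<Rightarrow> real" where
  "vdist P Q = (\<Sum>\<^sub>\<infinity>a. \<bar>pmf P a - pmf Q a\<bar>)"

end

theory Submission
  imports Defs
begin


locale wts =
  fixes w :: "nat \<Rightarrow> real"
  assumes nonneg: "\<And>i. 0 \<le> w i" and anti: "\<And>i j. i \<le> j \<Longrightarrow> w j \<le> w i"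
    and sums1: "w sums 1"
begin

definition S :: "nat \<Rightarrow> real" where "S k = (\<Sum>i<k. w i)"

lemma S_mono: "k \<le> k' \<Longrightarrow> S k \<le> S k'"
  unfolding S_def by (rule sum_mono2) (auto simp: nonneg)

lemma S_0[simp]: "S 0 = 0" by (simp add: S_def)
lemma S_Suc: "S (Suc k) = S k + w k" by (simp add: S_def)
lemma S_nonneg: "0 \<le> S k" using S_mono[of 0 k] by simp

lemma S_le1: "S k \<le> 1"
proof -
  have "S k \<le> suminf w" unfolding S_def
    by (rule sum_le_suminf) (use sums1 nonneg in \<open>auto simp: sums_iff\<close>)
  then show ?thesis using sums1 by (simp add: sums_iff)
qed

lemma S_lim: "S \<longlonglongrightarrow> 1"
  using sums1 unfolding sums_def S_def[abs_def] .

lemma idx_ex1: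
  assumes "\<delta> \<in> {0..<1}"
  shows "\<exists>!k. S k \<le> \<delta> \<and> \<delta> < S (Suc k)"
proof -
  from assms have "\<delta> < 1" by simp
  from order_tendstoD(1)[OF S_lim this] obtain n where "\<delta> < S n"
    by (meson eventually_sequentially order.refl)
  define m where "m = (LEAST n. \<delta> < S n)"
  have m: "\<delta> < S m" unfolding m_def by (rule LeastI) fact
  have "m \<noteq> 0"
  proof
    assume "m = 0" with m assms show False by simp
  qed
  then obtain k where k: "m = Suc k" by (cases m) auto
  have "\<not> \<delta> < S k" using k unfolding m_def
    by (metis Suc_n_not_le_n Least_le)
  then have ex: "S k \<le> \<delta> \<and> \<delta> < S (Suc k)" using m k by auto
  show ?thesis
  proof (rule ex1I[of _ k])
    show "S k \<le> \<delta> \<and> \<delta> < S (Suc k)" by fact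
  next
    fix k' assume k': "S k' \<le> \<delta> \<and> \<delta> < S (Suc k')"
    show "k' = k"
    proof (rule ccontr)
      assume "k' \<noteq> k"
      then consider "Suc k \<le> k'" | "Suc k' \<le> k" by linarith
      then show False
        by cases (use ex k' S_mono in \<open>fastforce+\<close>)
    qed
  qed
qed

definition idx :: "real \<Rightarrow> nat" where
  "idx \<delta> = (THE k. S k \<le> \<delta> \<and> \<delta> < S (Suc k))"

lemma idx: "\<delta> \<in> {0..<1} \<Longrightarrow> S (idx \<delta>) \<le> \<delta> \<and> \<delta> < S (Suc (idx \<delta>))"
  unfolding idx_def by (rule theI') (rule idx_ex1)

lemma idx_eq: "\<delta> \<in> {0..<1} \<Longrightarrow> idx \<delta> = k \<longleftrightarrow> S k \<le> \<delta> \<and> \<delta> < S (Suc k)"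
  using idx idx_ex1 by blast

lemma idx_pos: "\<delta> \<in> {0..<1} \<Longrightarrow> 0 < w (idx \<delta>)"
  using idx[of \<delta>] by (simp add: S_Suc)

lemma idx_mono: "\<delta> \<in> {0..<1} \<Longrightarrow> \<delta>' \<in> {0..<1} \<Longrightarrow> \<delta> \<le> \<delta>' \<Longrightarrow> idx \<delta> \<le> idx \<delta>'"
proof (rule ccontr)
  assume a: "\<delta> \<in> {0..<1}" "\<delta>' \<in> {0..<1}" "\<delta> \<le> \<delta>'" "\<not> idx \<delta> \<le> idx \<delta>'"
  then have "S (Suc (idx \<delta>')) \<le> S (idx \<delta>)" by (intro S_mono) auto
  with idx[OF a(1)] idx[OF a(2)] a(3) show False by linarith
qed

lemma idx_set: "{\<delta>\<in>{0..<1}. idx \<delta> = k} = {S k..<S (Suc k)}"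
proof -
  have "S (Suc k) \<le> 1" by (rule S_le1)
  then show ?thesis using idx_eq S_nonneg[of k] by fastforce
qed

lemma S_lt1: "0 < w k \<Longrightarrow> S k < 1"
  using S_le1[of "Suc k"] by (simp add: S_Suc)

lemma idx_S: "0 < w k \<Longrightarrow> idx (S k) = k"
  using S_lt1[of k] S_nonneg[of k] by (subst idx_eq) (auto simp: S_Suc)

end


lemma pmf_finite_ge:
  fixes p :: "'a pmf"
  assumes "0 < t"
  shows "finite {a. t \<le> pmf p a}"
proof -
  have "card G \<le> nat (ceiling (1 / t))" if "G \<subseteq> {a. t \<le> pmf p a}" "finite G" for G
  proof -
    have "real (card G) * t = (\<Sum>a\<in>G. t)" by simp
    also have "\<dots> \<le> (\<Sum>a\<in>G. pmf p a)" using that by (intro sum_mono) auto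
    also have "\<dots> = measure_pmf.prob p G" using that by (simp add: measure_measure_pmf_finite)
    also have "\<dots> \<le> 1" by simp
    finally have "real (card G) \<le> 1 / t" using assms by (simp add: field_simps)
    then have "real (card G) \<le> real (nat (ceiling (1 / t)))"
      by linarith
    then show ?thesis by linarith
  qed
  then show ?thesis using finite_if_finite_subsets_card_bdd by blast
qed

definition pick :: "'a pmf \<Rightarrow> 'a set \<Rightarrow> 'a" where
  "pick p A = (SOME a. a \<in> set_pmf p - A \<and> (\<forall>b\<in>set_pmf p - A. pmf p b \<le> pmf p a))"

lemma pick:
  assumes "set_pmf p - A \<noteq> {}"
  shows "pick p A \<in> set_pmf p - A \<and> (\<forall>b\<in>set_pmf p - A. pmf p b \<le> pmf p (pick p A))"
proof -
  obtain a0 where a0: "a0 \<in> set_pmf p - A" using assms by auto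
  define F where "F = {b\<in>set_pmf p - A. pmf p a0 \<le> pmf p b}"
  have pa0: "0 < pmf p a0" using a0 by (simp add: pmf_positive)
  have fin: "finite F" unfolding F_def
    by (rule finite_subset[OF _ pmf_finite_ge[of "pmf p a0" p, OF pa0]]) auto
  have "a0 \<in> F" using a0 by (simp add: F_def)
  then have "Max (pmf p ` F) \<in> pmf p ` F" using fin by (intro Max_in) auto
  then obtain a where a: "a \<in> F" "pmf p a = Max (pmf p ` F)" by auto
  have "\<forall>b\<in>set_pmf p - A. pmf p b \<le> pmf p a"
  proof
    fix b assume b: "b \<in> set_pmf p - A"
    show "pmf p b \<le> pmf p a"
    proof (cases "b \<in> F")
      case True then show ?thesis using a fin by simp
    next
      case False
      then have "pmf p b < pmf p a0" using b by (auto simp: F_def)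
      moreover have "pmf p a0 \<le> pmf p a" using a by (simp add: F_def)
      ultimately show ?thesis by simp
    qed
  qed
  moreover have "a \<in> set_pmf p - A" using a by (simp add: F_def)
  ultimately have "a \<in> set_pmf p - A \<and> (\<forall>b\<in>set_pmf p - A. pmf p b \<le> pmf p a)" by blast
  then show ?thesis unfolding pick_def by (rule someI)
qed

primrec T :: "'a pmf \<Rightarrow> nat \<Rightarrow> 'a set" where
  "T p 0 = {}"
| "T p (Suc n) = insert (pick p (T p n)) (T p n)"

definition zz :: "'a pmf \<Rightarrow> nat \<Rightarrow> 'a" where "zz p n = pick p (T p n)"

lemma T_eq: "T p n = zz p ` {..<n}"
  by (induction n) (auto simp: zz_def lessThan_Suc)

lemma T_mono: "i \<le> j \<Longrightarrow> T p i \<subseteq> T p j"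
  unfolding T_eq by auto

lemma pos_index_down: "j \<in> pos_index p \<Longrightarrow> i \<le> j \<Longrightarrow> i \<in> pos_index p"
  by (auto simp: pos_index_def split: if_splits)

lemma T_rest:
  assumes "n \<in> pos_index p"
  shows "set_pmf p - T p n \<noteq> {}"
proof (cases "finite (set_pmf p)")
  case False
  have "finite (T p n)" by (simp add: T_eq)
  then show ?thesis using False finite_subset[of "set_pmf p" "T p n"] by blast
next
  case True
  have "n \<le> card (set_pmf p) \<longrightarrow> T p n \<subseteq> set_pmf p \<and> card (T p n) = n" for n
  proof (induction n)
    case 0 then show ?case by simp
  next
    case (Suc n)
    show ?case
    proof
      assume a: "Suc n \<le> card (set_pmf p)"
      with Suc have h: "T p n \<subseteq> set_pmf p" "card (T p n) = n" by auto
      have finT: "finite (T p n)" by (simp add: T_eq)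
      have ne: "set_pmf p - T p n \<noteq> {}"
      proof
        assume "set_pmf p - T p n = {}"
        then have "set_pmf p \<subseteq> T p n" by blast
        then have "card (set_pmf p) \<le> card (T p n)" using finT by (rule card_mono[rotated])
        then show False using h a by simp
      qed
      from pick[OF ne] h finT show "T p (Suc n) \<subseteq> set_pmf p \<and> card (T p (Suc n)) = Suc n"
        by auto
    qed
  qed
  moreover have nlt: "n < card (set_pmf p)" using assms True by (simp add: pos_index_def)
  ultimately have h: "T p n \<subseteq> set_pmf p" "card (T p n) = n" by auto
  have finT: "finite (T p n)" by (simp add: T_eq)
  show ?thesis
  proof
    assume "set_pmf p - T p n = {}"
    then have "set_pmf p \<subseteq> T p n" by blast
    then have "card (set_pmf p) \<le> card (T p n)" using finT by (rule card_mono[rotated])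
    then show False using h nlt by simp
  qed
qed

lemma zz_in: assumes "n \<in> pos_index p" shows "zz p n \<in> set_pmf p - T p n"
  using pick[OF T_rest[OF assms]] by (simp add: zz_def)

lemma zz_max: assumes "n \<in> pos_index p" "b \<in> set_pmf p - T p n" shows "pmf p b \<le> pmf p (zz p n)"
  using pick[OF T_rest[OF assms(1)]] assms(2) by (simp add: zz_def)

lemma zz_inj: "inj_on (zz p) (pos_index p)"
proof (rule inj_onI)
  fix i j assume ij: "i \<in> pos_index p" "j \<in> pos_index p" "zz p i = zz p j"
  show "i = j"
  proof (rule ccontr)
    assume "i \<noteq> j"
    then consider "i < j" | "j < i" by linarith
    then show False
    proof cases
      case 1 then have "zz p i \<in> T p j" by (simp add: T_eq)
      then show False using zz_in[OF ij(2)] ij(3) by simp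
    next
      case 2 then have "zz p j \<in> T p i" by (simp add: T_eq)
      then show False using zz_in[OF ij(1)] ij(3) by simp
    qed
  qed
qed

lemma zz_image: "zz p ` pos_index p = set_pmf p"
proof (cases "finite (set_pmf p)")
  case True
  have sub: "zz p ` pos_index p \<subseteq> set_pmf p" using zz_in by auto
  have "card (zz p ` pos_index p) = card (set_pmf p)"
    using zz_inj[of p] True by (simp add: card_image pos_index_def)
  then show ?thesis using sub True by (simp add: card_subset_eq)
next
  case False
  then have K: "pos_index p = UNIV" by (simp add: pos_index_def)
  have sub: "zz p ` pos_index p \<subseteq> set_pmf p" using zz_in by auto
  moreover have "set_pmf p \<subseteq> zz p ` pos_index p"
  proof
    fix a assume a: "a \<in> set_pmf p"
    show "a \<in> zz p ` pos_index p"
    proof (rule ccontr)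
      assume na: "a \<notin> zz p ` pos_index p"
      have "range (zz p) \<subseteq> {b. pmf p a \<le> pmf p b}"
      proof safe
        fix n
        have "a \<in> set_pmf p - T p n" using a na K by (auto simp: T_eq)
        then show "pmf p a \<le> pmf p (zz p n)" using zz_max[of n p a] K by simp
      qed
      then have "finite (range (zz p))"
        using pmf_finite_ge[of "pmf p a" p] a by (auto intro: finite_subset simp: pmf_positive)
      moreover have "inj (zz p)" using zz_inj[of p] K by simp
      ultimately show False by (simp add: finite_image_iff)
    qed
  qed
  ultimately show ?thesis by blast
qed

lemma desc_enum_ex: "\<exists>z. desc_enum p z"
proof -
  have "desc_enum p (zz p)"
    unfolding desc_enum_def
  proof safe
    show "bij_betw (zz p) (pos_index p) (set_pmf p)"
      by (simp add: bij_betw_def zz_inj zz_image)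
  next
    fix i j assume ij: "i \<in> pos_index p" "j \<in> pos_index p" "i \<le> j"
    have "zz p j \<in> set_pmf p - T p i" using zz_in[OF ij(2)] T_mono[OF ij(3), of p] by auto
    then show "pmf p (zz p j) \<le> pmf p (zz p i)" using zz_max[OF ij(1)] by simp
  qed
  then show ?thesis by blast
qed



lemma pmf_has_sum: "(pmf p has_sum 1) (set_pmf p)"
proof -
  note a = pmf_abs_summable[of p "set_pmf p"]
  have "(\<lambda>x. norm (pmf p x)) summable_on set_pmf p" using abs_summable_equivalent a by blast
  then have s: "pmf p summable_on set_pmf p" by simp
  have "infsum (pmf p) (set_pmf p) = 1"
    using infsetsum_infsum[OF a] infsetsum_pmf_eq_1[of p "set_pmf p"] by simp
  with s show ?thesis using has_sum_infsum by fastforce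
qed

definition ez :: "'a pmf \<Rightarrow> nat \<Rightarrow> 'a" where "ez p = (SOME z. desc_enum p z)"
definition wp :: "'a pmf \<Rightarrow> nat \<Rightarrow> real" where
  "wp p i = (if i \<in> pos_index p then pmf p (ez p i) else 0)"

lemma ez: "desc_enum p (ez p)"
  unfolding ez_def using desc_enum_ex[of p] by (rule someI_ex)

lemma ez_bij: "bij_betw (ez p) (pos_index p) (set_pmf p)"
  using ez[of p] by (simp add: desc_enum_def)

lemma wp_pos_iff: "0 < wp p i \<longleftrightarrow> i \<in> pos_index p"
  using bij_betw_apply[OF ez_bij[of p]] by (auto simp: wp_def intro: pmf_positive)

lemma wts_wp: "wts (wp p)"
proof
  show "0 \<le> wp p i" for i by (simp add: wp_def)
next
  fix i j :: nat assume ij: "i \<le> j"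
  show "wp p j \<le> wp p i"
  proof (cases "j \<in> pos_index p")
    case True
    then have "i \<in> pos_index p" using pos_index_down ij by blast
    then show ?thesis using True ij ez[of p] by (auto simp: wp_def desc_enum_def)
  next
    case False then show ?thesis by (simp add: wp_def)
  qed
next
  have "((\<lambda>i. pmf p (ez p i)) has_sum 1) (pos_index p)"
    using has_sum_reindex_bij_betw[OF ez_bij[of p], where f="pmf p" and S=1] pmf_has_sum[of p] by simp
  then have "(wp p has_sum 1) UNIV"
    using has_sum_cong_neutral[where S="pos_index p" and T=UNIV and f="\<lambda>i. pmf p (ez p i)" and g="wp p" and x=1]
    by (auto simp: wp_def)
  then show "wp p sums 1" by (rule has_sum_imp_sums)
qed

lemma cfun_eq:
  assumes d: "\<delta> \<in> {0..<1}"
  shows "cfun p \<delta> = ln (1 / wp p (wts.idx (wp p) \<delta>))"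
proof -
  interpret wts "wp p" by (rule wts_wp)
  define k where "k = idx \<delta>"
  have kK: "k \<in> pos_index p" using idx_pos[OF d] wp_pos_iff k_def by blast
  have sums: "(\<Sum>i<m. pmf p (ez p i)) = S m" if "m \<le> Suc k" for m
    unfolding S_def using that pos_index_down[OF kK]
    by (intro sum.cong) (auto simp: wp_def)
  have "(THE k. k \<in> pos_index p \<and> (\<Sum>i<k. pmf p (ez p i)) \<le> \<delta> \<and> \<delta> < (\<Sum>i<Suc k. pmf p (ez p i))) = k"
  proof (rule the_equality)
    show "k \<in> pos_index p \<and> (\<Sum>i<k. pmf p (ez p i)) \<le> \<delta> \<and> \<delta> < (\<Sum>i<Suc k. pmf p (ez p i))"
      using kK sums idx[OF d] k_def by (simp add: S_Suc wp_def)
  next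
    fix k' assume k': "k' \<in> pos_index p \<and> (\<Sum>i<k'. pmf p (ez p i)) \<le> \<delta> \<and> \<delta> < (\<Sum>i<Suc k'. pmf p (ez p i))"
    have "(\<Sum>i<m. pmf p (ez p i)) = S m" if "m \<le> Suc k'" for m
      unfolding S_def using that pos_index_down[of k' p] k'
      by (intro sum.cong) (auto simp: wp_def)
    then have "S k' \<le> \<delta> \<and> \<delta> < S (Suc k')" using k' by (simp add: S_Suc wp_def)
    then show "k' = k" using idx_eq[OF d, of k'] k_def by simp
  qed
  then show ?thesis
    unfolding cfun_def ez_def[symmetric] Let_def using kK k_def by (simp add: wp_def)
qed



context finite_measure
begin

lemma sub2: "A \<in> sets M \<Longrightarrow> B \<in> sets M \<Longrightarrow> measure M (A \<union> B) \<le> measure M A + measure M B"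
  by (rule measure_subadditive) auto

lemma part_sum:
  fixes f :: "'a \<Rightarrow> 'b::countable"
  assumes f: "f \<in> M \<rightarrow>\<^sub>M count_space UNIV" and D: "D \<in> sets M"
  shows "(\<lambda>b. measure M (D \<inter> (f -` {b} \<inter> space M))) summable_on UNIV"
    and "(\<Sum>\<^sub>\<infinity>b. measure M (D \<inter> (f -` {b} \<inter> space M))) \<le> measure M D"
proof -
  have meas: "D \<inter> (f -` {b} \<inter> space M) \<in> sets M" for b
    using D measurable_sets[OF f, of "{b}"] by auto
  have bnd: "sum (\<lambda>b. measure M (D \<inter> (f -` {b} \<inter> space M))) B \<le> measure M D" if "finite B" for B
  proof -
    have "sum (\<lambda>b. measure M (D \<inter> (f -` {b} \<inter> space M))) B
        = measure M (\<Union>b\<in>B. D \<inter> (f -` {b} \<inter> space M))"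
      using that meas by (intro finite_measure_finite_Union[symmetric]) (auto simp: disjoint_family_on_def)
    also have "\<dots> \<le> measure M D" using D by (intro finite_measure_mono) auto
    finally show ?thesis .
  qed
  show s: "(\<lambda>b. measure M (D \<inter> (f -` {b} \<inter> space M))) summable_on UNIV"
    using bnd by (intro nonneg_bdd_above_summable_on) (auto simp: bdd_above_def)
  show "(\<Sum>\<^sub>\<infinity>b. measure M (D \<inter> (f -` {b} \<inter> space M))) \<le> measure M D"
    using s bnd by (intro infsum_le_finite_sums) auto
qed

lemma coupling:
  fixes f g :: "'a \<Rightarrow> 'b::countable"
  assumes f: "f \<in> M \<rightarrow>\<^sub>M count_space UNIV" and g: "g \<in> M \<rightarrow>\<^sub>M count_space UNIV"
    and D: "D \<in> sets M" and Dsub: "{x\<in>space M. f x \<noteq> g x} \<subseteq> D"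
  shows "(\<Sum>\<^sub>\<infinity>b. \<bar>measure M (f -` {b} \<inter> space M) - measure M (g -` {b} \<inter> space M)\<bar>) \<le> 2 * measure M D"
proof -
  define a where "a b = measure M (D \<inter> (f -` {b} \<inter> space M))" for b
  define c where "c b = measure M (D \<inter> (g -` {b} \<inter> space M))" for b
  have Fm: "f -` {b} \<inter> space M \<in> sets M" for b using measurable_sets[OF f, of "{b}"] by auto
  have Gm: "g -` {b} \<inter> space M \<in> sets M" for b using measurable_sets[OF g, of "{b}"] by auto
  have one: "measure M (f -` {b} \<inter> space M) - measure M (g -` {b} \<inter> space M) \<le> a b"
    if f: "f \<in> M \<rightarrow>\<^sub>M count_space UNIV" and g: "g \<in> M \<rightarrow>\<^sub>M count_space UNIV"
      and Dsub: "{x\<in>space M. f x \<noteq> g x} \<subseteq> D"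
    and a: "a = (\<lambda>b. measure M (D \<inter> (f -` {b} \<inter> space M)))"
    for f g :: "'a \<Rightarrow> 'b" and a b
  proof -
    let ?F = "f -` {b} \<inter> space M" and ?G = "g -` {b} \<inter> space M"
    have Fm: "?F \<in> sets M" using measurable_sets[OF f, of "{b}"] by auto
    have Gm: "?G \<in> sets M" using measurable_sets[OF g, of "{b}"] by auto
    have "?F \<subseteq> (?F \<inter> ?G) \<union> (D \<inter> ?F)" using Dsub by auto
    then have "measure M ?F \<le> measure M ((?F \<inter> ?G) \<union> (D \<inter> ?F))"
      using Fm Gm D by (intro finite_measure_mono) auto
    also have "\<dots> \<le> measure M (?F \<inter> ?G) + measure M (D \<inter> ?F)"
      using Fm Gm D by (intro sub2) auto
    also have "measure M (?F \<inter> ?G) \<le> measure M ?G"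
      using Gm by (intro finite_measure_mono) auto
    finally show ?thesis using a by simp
  qed
  have h1: "measure M (f -` {b} \<inter> space M) - measure M (g -` {b} \<inter> space M) \<le> a b" for b
    by (rule one[OF f g Dsub]) (simp add: a_def[abs_def])
  have h2: "measure M (g -` {b} \<inter> space M) - measure M (f -` {b} \<inter> space M) \<le> c b" for b
    by (rule one[OF g f]) (use Dsub in \<open>auto simp: c_def[abs_def]\<close>)
  have sa: "a summable_on UNIV" "infsum a UNIV \<le> measure M D"
    using part_sum[OF f D] by (simp_all add: a_def[abs_def])
  have sc: "c summable_on UNIV" "infsum c UNIV \<le> measure M D"
    using part_sum[OF g D] by (simp_all add: c_def[abs_def])
  have sac: "(\<lambda>b. a b + c b) summable_on UNIV" using sa sc by (intro summable_on_add)
  have le: "\<bar>measure M (f -` {b} \<inter> space M) - measure M (g -` {b} \<inter> space M)\<bar> \<le> a b + c b" for b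
  proof -
    have "0 \<le> a b" "0 \<le> c b" by (simp_all add: a_def c_def)
    then show ?thesis using h1[of b] h2[of b] by linarith
  qed
  have sabs: "(\<lambda>b. \<bar>measure M (f -` {b} \<inter> space M) - measure M (g -` {b} \<inter> space M)\<bar>) summable_on UNIV"
    by (rule summable_on_comparison_test[OF sac]) (use le in auto)
  have "(\<Sum>\<^sub>\<infinity>b. \<bar>measure M (f -` {b} \<inter> space M) - measure M (g -` {b} \<inter> space M)\<bar>) \<le> (\<Sum>\<^sub>\<infinity>b. a b + c b)"
    by (rule infsum_mono[OF sabs sac le])
  also have "\<dots> = infsum a UNIV + infsum c UNIV" using sa sc by (intro infsum_add) auto
  also have "\<dots> \<le> 2 * measure M D" using sa sc by simp
  finally show ?thesis .
qed

end


definition U01 :: "real measure" where "U01 = restrict_space lborel {0..<1}"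

lemma space_U01[simp]: "space U01 = {0..<1}"
  by (simp add: U01_def space_restrict_space)

lemma sets_U01: "A \<in> sets U01 \<longleftrightarrow> A \<subseteq> {0..<1} \<and> A \<in> sets lborel"
  unfolding U01_def by (rule sets_restrict_space_iff) simp

lemma measure_U01: "A \<subseteq> {0..<1} \<Longrightarrow> measure U01 A = measure lborel A"
  unfolding U01_def by (rule measure_restrict_space) auto

lemma prob_U01: "prob_space U01"
proof (rule prob_spaceI)
  have "emeasure U01 {0..<1} = emeasure lborel {0..<(1::real)}"
    unfolding U01_def by (rule emeasure_restrict_space) auto
  then show "emeasure U01 (space U01) = 1" by simp
qed

context wts
begin

lemma idx_meas: "idx \<in> U01 \<rightarrow>\<^sub>M count_space UNIV"
proof (rule iffD2[OF measurable_count_space_eq_countable[OF countableI_type]], intro conjI ballI)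
  show "idx \<in> space U01 \<rightarrow> UNIV" by simp
next
  fix i :: nat assume "i \<in> UNIV"
  have "idx -` {i} \<inter> space U01 = {\<delta>\<in>{0..<1}. idx \<delta> = i}" by auto
  also have "\<dots> = {S i..<S (Suc i)}" by (rule idx_set)
  finally have eq: "idx -` {i} \<inter> space U01 = {S i..<S (Suc i)}" .
  moreover have "{S i..<S (Suc i)} \<subseteq> {0..<1}" using S_nonneg[of i] S_le1[of "Suc i"] by auto
  ultimately show "idx -` {i} \<inter> space U01 \<in> sets U01" unfolding sets_U01 by simp
qed

lemma idx_set_sets: "{\<delta>\<in>{0..<1}. idx \<delta> = i} \<in> sets U01"
proof -
  have "{S i..<S (Suc i)} \<subseteq> {0..<1}" using S_nonneg[of i] S_le1[of "Suc i"] by auto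
  then show ?thesis unfolding idx_set sets_U01 by simp
qed

lemma measure_idx: "measure U01 {\<delta>\<in>{0..<1}. idx \<delta> = i} = w i"
proof -
  have le: "S i \<le> S (Suc i)" by (rule S_mono) simp
  have sub: "{S i..<S (Suc i)} \<subseteq> {0..<1}" using S_nonneg[of i] S_le1[of "Suc i"] by auto
  show ?thesis unfolding idx_set measure_U01[OF sub] using le by (simp add: S_Suc)
qed

end

lemma pair_meas:
  assumes "f \<in> U01 \<rightarrow>\<^sub>M count_space (UNIV::nat set)" "g \<in> U01 \<rightarrow>\<^sub>M count_space (UNIV::nat set)"
  shows "{\<delta>\<in>{0..<1}. P (f \<delta>) (g \<delta>)} \<in> sets U01"
proof -
  have "(\<lambda>\<delta>. (f \<delta>, g \<delta>)) \<in> U01 \<rightarrow>\<^sub>M count_space UNIV \<Otimes>\<^sub>M count_space UNIV"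
    using assms by (rule measurable_Pair)
  then have m: "(\<lambda>\<delta>. (f \<delta>, g \<delta>)) \<in> U01 \<rightarrow>\<^sub>M count_space (UNIV::(nat\<times>nat) set)"
    by (simp add: pair_measure_countable)
  have "(\<lambda>\<delta>. (f \<delta>, g \<delta>)) -` {p. P (fst p) (snd p)} \<inter> space U01 \<in> sets U01"
    by (rule measurable_sets[OF m]) simp
  moreover have "(\<lambda>\<delta>. (f \<delta>, g \<delta>)) -` {p. P (fst p) (snd p)} \<inter> space U01 = {\<delta>\<in>{0..<1}. P (f \<delta>) (g \<delta>)}"
    by auto
  ultimately show ?thesis by simp
qed


locale two = X: wts wx + Y: wts wy for wx wy :: "nat \<Rightarrow> real"
begin

definition psi :: "nat \<Rightarrow> nat" where "psi i = Y.idx (X.S i)"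

lemma Xstart: "\<delta> \<in> {0..<1} \<Longrightarrow> X.S (X.idx \<delta>) \<in> {0..<1} \<and> X.S (X.idx \<delta>) \<le> \<delta>"
  using X.S_lt1[OF X.idx_pos] X.S_nonneg X.idx by auto

lemma key:
  assumes d: "\<delta> \<in> {0..<1}" and j: "psi (X.idx \<delta>) = j" and n: "Y.idx \<delta> \<noteq> j"
  shows "Y.S (Suc j) \<in> {0..<1} \<and> X.idx (Y.S (Suc j)) = X.idx \<delta>"
proof -
  define i where "i = X.idx \<delta>"
  define a where "a = X.S i"
  have a: "a \<in> {0..<1}" "a \<le> \<delta>" using Xstart[OF d] by (simp_all add: a_def i_def)
  have "Y.idx a = j" using j by (simp add: psi_def a_def i_def)
  then have ya: "Y.S j \<le> a" "a < Y.S (Suc j)" using Y.idx_eq[OF a(1)] by auto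
  have "\<not> \<delta> < Y.S (Suc j)"
  proof
    assume "\<delta> < Y.S (Suc j)"
    then have "Y.idx \<delta> = j" using Y.idx_eq[OF d] ya a by auto
    with n show False by simp
  qed
  then have c: "Y.S (Suc j) \<le> \<delta>" by simp
  have c01: "Y.S (Suc j) \<in> {0..<1}" using c d Y.S_nonneg by auto
  have "X.S i \<le> Y.S (Suc j) \<and> Y.S (Suc j) < X.S (Suc i)"
    using ya a c X.idx[OF d] by (auto simp: a_def i_def)
  then have "X.idx (Y.S (Suc j)) = i" using X.idx_eq[OF c01] by blast
  then show ?thesis using c01 by (simp add: i_def)
qed

lemma main_bound:
  assumes gam: "exp (- \<gamma>) \<le> \<epsilon>"
  shows "measure U01 {\<delta>\<in>{0..<1}. psi (X.idx \<delta>) \<noteq> Y.idx \<delta>}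
     \<le> \<epsilon> + measure U01 {\<delta>\<in>{0..<1}. ln (1 / wx (X.idx \<delta>)) - ln (1 / wy (Y.idx \<delta>)) < \<gamma>}"
proof -
  interpret U: prob_space U01 by (rule prob_U01)
  have mX: "(\<lambda>\<delta>. psi (X.idx \<delta>)) \<in> U01 \<rightarrow>\<^sub>M count_space UNIV"
    by (rule measurable_compose[OF X.idx_meas measurable_count_space])
  define bad where "bad i \<longleftrightarrow> exp (- \<gamma>) * wy (psi i) < wx i" for i
  define Ov where "Ov = {\<delta>\<in>{0..<1}. psi (X.idx \<delta>) \<noteq> Y.idx \<delta>}"
  define E where "E = {\<delta>\<in>{0..<1}. ln (1 / wx (X.idx \<delta>)) - ln (1 / wy (Y.idx \<delta>)) < \<gamma>}"
  define G where "G j = {\<delta>\<in>{0..<1}. \<not> bad (X.idx \<delta>) \<and> psi (X.idx \<delta>) = j \<and> Y.idx \<delta> \<noteq> j}" for j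
  have Em: "E \<in> sets U01" unfolding E_def
    by (rule pair_meas[OF X.idx_meas Y.idx_meas])
  have Gm: "G j \<in> sets U01" for j unfolding G_def
    by (rule pair_meas[OF X.idx_meas Y.idx_meas])
  have Ovm: "Ov \<in> sets U01" unfolding Ov_def
    by (rule pair_meas[OF X.idx_meas Y.idx_meas])
  have disj: "disjoint_family G" by (auto simp: disjoint_family_on_def G_def)
  have GU: "range G \<subseteq> sets U01" using Gm by auto
  have sG: "(\<lambda>j. measure U01 (G j)) sums measure U01 (\<Union>j. G j)"
    by (rule U.finite_measure_UNION[OF GU disj])
  have UGm: "(\<Union>j. G j) \<in> sets U01" using GU by (intro sets.countable_UN) auto
  have Gj: "measure U01 (G j) \<le> exp (- \<gamma>) * wy j" for j
  proof (cases "G j = {}")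
    case True then show ?thesis using Y.nonneg[of j] by simp
  next
    case False then obtain \<delta>0 where d0: "\<delta>0 \<in> G j" by auto
    define i0 where "i0 = X.idx \<delta>0"
    have sub: "G j \<subseteq> {\<delta>\<in>{0..<1}. X.idx \<delta> = i0}"
    proof
      fix \<delta> assume d: "\<delta> \<in> G j"
      have "X.idx (Y.S (Suc j)) = X.idx \<delta>" using key[of \<delta> j] d by (auto simp: G_def)
      moreover have "X.idx (Y.S (Suc j)) = X.idx \<delta>0" using key[of \<delta>0 j] d0 by (auto simp: G_def)
      ultimately show "\<delta> \<in> {\<delta>\<in>{0..<1}. X.idx \<delta> = i0}" using d by (auto simp: G_def i0_def)
    qed
    have "measure U01 (G j) \<le> measure U01 {\<delta>\<in>{0..<1}. X.idx \<delta> = i0}"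
      by (rule U.finite_measure_mono[OF sub X.idx_set_sets])
    also have "\<dots> = wx i0" by (rule X.measure_idx)
    also have "wx i0 \<le> exp (- \<gamma>) * wy (psi i0)" using d0 by (auto simp: G_def i0_def bad_def)
    also have "psi i0 = j" using d0 by (auto simp: G_def i0_def)
    finally show ?thesis .
  qed
  have UG: "measure U01 (\<Union>j. G j) \<le> exp (- \<gamma>)"
    using sums_le[OF Gj sG sums_mult[OF Y.sums1, of "exp (- \<gamma>)"]] by simp
  have sub: "Ov \<subseteq> E \<union> (\<Union>j. G j)"
  proof
    fix \<delta> assume d: "\<delta> \<in> Ov"
    then have d01: "\<delta> \<in> {0..<1}" and ne: "psi (X.idx \<delta>) \<noteq> Y.idx \<delta>" by (auto simp: Ov_def)
    show "\<delta> \<in> E \<union> (\<Union>j. G j)"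
    proof (cases "bad (X.idx \<delta>)")
      case False then have "\<delta> \<in> G (psi (X.idx \<delta>))" using d01 ne by (auto simp: G_def)
      then show ?thesis by blast
    next
      case True
      define i where "i = X.idx \<delta>"
      define j where "j = Y.idx \<delta>"
      have st: "X.S i \<in> {0..<1}" "X.S i \<le> \<delta>" using Xstart[OF d01] by (simp_all add: i_def)
      have "psi i \<le> j" unfolding psi_def j_def using Y.idx_mono[OF st(1) d01 st(2)] .
      then have wyle: "wy j \<le> wy (psi i)" by (rule Y.anti)
      have pos: "0 < wx i" "0 < wy j" using X.idx_pos[OF d01] Y.idx_pos[OF d01] by (simp_all add: i_def j_def)
      have "exp (- \<gamma>) * wy j \<le> exp (- \<gamma>) * wy (psi i)" using wyle by simp
      also have "\<dots> < wx i" using True by (simp add: bad_def i_def)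
      finally have "exp (- \<gamma>) * wy j < wx i" .
      then have "exp \<gamma> * (exp (- \<gamma>) * wy j) < exp \<gamma> * wx i" by simp
      then have "wy j < wx i * exp \<gamma>" by (simp add: exp_minus field_simps)
      then have "ln (wy j) < ln (wx i * exp \<gamma>)" using pos by simp
      then have "ln (wy j) < ln (wx i) + \<gamma>" using pos by (simp add: ln_mult)
      then have "ln (1 / wx i) - ln (1 / wy j) < \<gamma>" using pos by (simp add: ln_div)
      then have "\<delta> \<in> E" using d01 by (simp add: E_def i_def j_def)
      then show ?thesis by blast
    qed
  qed
  have "measure U01 Ov \<le> measure U01 (E \<union> (\<Union>j. G j))"
    using sub Em UGm by (intro U.finite_measure_mono) auto
  also have "\<dots> \<le> measure U01 E + measure U01 (\<Union>j. G j)"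
    using Em UGm by (rule U.sub2)
  finally show ?thesis using UG gam by (simp add: Ov_def E_def)
qed

end


lemma distr_U01:
  fixes p :: "'a::countable pmf"
  shows "distr U01 (count_space UNIV) (\<lambda>\<delta>. ez p (wts.idx (wp p) \<delta>)) = measure_pmf p"
proof -
  interpret wts "wp p" by (rule wts_wp)
  interpret U: prob_space U01 by (rule prob_U01)
  have m: "(\<lambda>\<delta>. ez p (idx \<delta>)) \<in> U01 \<rightarrow>\<^sub>M count_space UNIV"
    by (rule measurable_compose[OF idx_meas measurable_count_space])
  have idxK: "\<delta> \<in> {0..<1} \<Longrightarrow> idx \<delta> \<in> pos_index p" for \<delta>
    using idx_pos wp_pos_iff by blast
  show ?thesis
  proof (rule measure_eqI_countable[where A=UNIV])
    fix a :: 'a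
    have "emeasure (distr U01 (count_space UNIV) (\<lambda>\<delta>. ez p (idx \<delta>))) {a}
        = emeasure U01 ((\<lambda>\<delta>. ez p (idx \<delta>)) -` {a} \<inter> space U01)"
      by (rule emeasure_distr[OF m]) simp
    also have "\<dots> = pmf p a"
    proof (cases "a \<in> set_pmf p")
      case True
      then obtain i where i: "i \<in> pos_index p" "a = ez p i"
        using bij_betw_imp_surj_on[OF ez_bij[of p]] by auto
      have inj: "inj_on (ez p) (pos_index p)" using bij_betw_imp_inj_on[OF ez_bij[of p]] .
      have "(\<lambda>\<delta>. ez p (idx \<delta>)) -` {a} \<inter> space U01 = {\<delta>\<in>{0..<1}. idx \<delta> = i}"
        using i idxK inj_onD[OF inj] by auto
      then have "emeasure U01 ((\<lambda>\<delta>. ez p (idx \<delta>)) -` {a} \<inter> space U01) = ennreal (wp p i)"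
        using measure_idx[of i] by (simp add: U.emeasure_eq_measure)
      then show ?thesis using i by (simp add: wp_def)
    next
      case False
      have "(\<lambda>\<delta>. ez p (idx \<delta>)) -` {a} \<inter> space U01 = {}"
        using False idxK bij_betw_apply[OF ez_bij[of p]] by auto
      then show ?thesis using False by (simp add: set_pmf_iff)
    qed
    also have "\<dots> = emeasure (measure_pmf p) {a}" by (simp add: emeasure_pmf_single)
    finally show "emeasure (distr U01 (count_space UNIV) (\<lambda>\<delta>. ez p (idx \<delta>))) {a} = emeasure (measure_pmf p) {a}" .
  qed auto
qed

lemma arith_fin: "(x::real) \<le> 2 * (e + m) \<Longrightarrow> 0 \<le> m \<Longrightarrow> 0 < e \<Longrightarrow> x \<le> 9 * e + 10 * m"
  by (simp add: algebra_simps)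


theorem proposition1:
  fixes PX :: "'a::countable pmf" and PY :: "'b::countable pmf"
    and \<epsilon> \<gamma> :: real
  assumes "0 < \<epsilon>" "\<epsilon> < 1" "0 < \<gamma>" "exp (- \<gamma>) \<le> \<epsilon>"
  shows "\<exists>\<phi> :: 'a \<Rightarrow> 'b.
           vdist PY (map_pmf \<phi> PX)
             \<le> 9 * \<epsilon> + 10 * measure lborel {\<delta> \<in> {0..<1}. cfun PX \<delta> - cfun PY \<delta> < \<gamma>}"
proof -
  interpret T: two "wp PX" "wp PY" by (intro two.intro wts_wp)
  interpret U: prob_space U01 by (rule prob_U01)
  define Fx where "Fx \<delta> = ez PX (T.X.idx \<delta>)" for \<delta>
  define Fy where "Fy \<delta> = ez PY (T.Y.idx \<delta>)" for \<delta>
  define \<phi> where "\<phi> a = ez PY (T.psi (inv_into (pos_index PX) (ez PX) a))" for a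
  have mFx: "Fx \<in> U01 \<rightarrow>\<^sub>M count_space UNIV" unfolding Fx_def
    by (rule measurable_compose[OF T.X.idx_meas measurable_count_space])
  have mFy: "Fy \<in> U01 \<rightarrow>\<^sub>M count_space UNIV" unfolding Fy_def
    by (rule measurable_compose[OF T.Y.idx_meas measurable_count_space])
  have mG: "\<phi> \<circ> Fx \<in> U01 \<rightarrow>\<^sub>M count_space UNIV"
    unfolding comp_def by (rule measurable_compose[OF mFx measurable_count_space])
  have dX: "distr U01 (count_space UNIV) Fx = measure_pmf PX"
    unfolding Fx_def by (rule distr_U01)
  have dY: "distr U01 (count_space UNIV) Fy = measure_pmf PY"
    unfolding Fy_def by (rule distr_U01)
  have pY: "pmf PY b = measure U01 (Fy -` {b} \<inter> space U01)" for b
  proof -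
    have "pmf PY b = measure (distr U01 (count_space UNIV) Fy) {b}"
      by (simp add: dY measure_pmf_single)
    also have "\<dots> = measure U01 (Fy -` {b} \<inter> space U01)" by (rule measure_distr[OF mFy]) simp
    finally show ?thesis .
  qed
  have pG: "pmf (map_pmf \<phi> PX) b = measure U01 ((\<phi> \<circ> Fx) -` {b} \<inter> space U01)" for b
  proof -
    have "pmf (map_pmf \<phi> PX) b = measure (measure_pmf (map_pmf \<phi> PX)) {b}"
      by (rule measure_pmf_single[symmetric])
    also have "\<dots> = measure (distr (distr U01 (count_space UNIV) Fx) (count_space UNIV) \<phi>) {b}"
      by (simp only: map_pmf_rep_eq dX)
    also have "\<dots> = measure (distr U01 (count_space UNIV) (\<phi> \<circ> Fx)) {b}"
      by (subst distr_distr[OF measurable_count_space mFx]) simp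
    also have "\<dots> = measure U01 ((\<phi> \<circ> Fx) -` {b} \<inter> space U01)" by (rule measure_distr[OF mG]) simp
    finally show ?thesis .
  qed
  define Ov where "Ov = {\<delta>\<in>{0..<1}. T.psi (T.X.idx \<delta>) \<noteq> T.Y.idx \<delta>}"
  have Ovm: "Ov \<in> sets U01" unfolding Ov_def by (rule pair_meas[OF T.X.idx_meas T.Y.idx_meas])
  have inj: "inj_on (ez PX) (pos_index PX)" using bij_betw_imp_inj_on[OF ez_bij[of PX]] .
  have Dsub: "{\<delta>\<in>space U01. Fy \<delta> \<noteq> (\<phi> \<circ> Fx) \<delta>} \<subseteq> Ov"
  proof safe
    fix \<delta> assume d: "\<delta> \<in> space U01" and ne: "Fy \<delta> \<noteq> (\<phi> \<circ> Fx) \<delta>"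
    have d01: "\<delta> \<in> {0..<1}" using d by simp
    have K: "T.X.idx \<delta> \<in> pos_index PX" using T.X.idx_pos[OF d01] wp_pos_iff by blast
    have "(\<phi> \<circ> Fx) \<delta> = ez PY (T.psi (T.X.idx \<delta>))"
      using inv_into_f_f[OF inj K] by (simp add: \<phi>_def Fx_def)
    then show "\<delta> \<in> Ov" using ne d01 by (auto simp: Ov_def Fy_def)
  qed
  define m where "m = measure lborel {\<delta> \<in> {0..<1}. cfun PX \<delta> - cfun PY \<delta> < \<gamma>}"
  have h1: "vdist PY (map_pmf \<phi> PX)
      = (\<Sum>\<^sub>\<infinity>b. \<bar>measure U01 (Fy -` {b} \<inter> space U01) - measure U01 ((\<phi> \<circ> Fx) -` {b} \<inter> space U01)\<bar>)"
    unfolding vdist_def pY pG ..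
  have h2: "(\<Sum>\<^sub>\<infinity>b. \<bar>measure U01 (Fy -` {b} \<inter> space U01) - measure U01 ((\<phi> \<circ> Fx) -` {b} \<inter> space U01)\<bar>)
      \<le> 2 * measure U01 Ov"
    by (rule U.coupling[OF mFy mG Ovm Dsub])
  have h3: "measure U01 Ov \<le> \<epsilon> + measure U01 {\<delta>\<in>{0..<1}. ln (1 / wp PX (T.X.idx \<delta>)) - ln (1 / wp PY (T.Y.idx \<delta>)) < \<gamma>}"
    unfolding Ov_def by (rule T.main_bound[OF assms(4)])
  have h4: "{\<delta>\<in>{0..<1}. ln (1 / wp PX (T.X.idx \<delta>)) - ln (1 / wp PY (T.Y.idx \<delta>)) < \<gamma>}
      = {\<delta> \<in> {0..<1}. cfun PX \<delta> - cfun PY \<delta> < \<gamma>}"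
  proof (rule Collect_cong)
    fix \<delta> :: real
    show "(\<delta> \<in> {0..<1} \<and> ln (1 / wp PX (T.X.idx \<delta>)) - ln (1 / wp PY (T.Y.idx \<delta>)) < \<gamma>)
      = (\<delta> \<in> {0..<1} \<and> cfun PX \<delta> - cfun PY \<delta> < \<gamma>)"
      by (cases "\<delta> \<in> {0..<1}") (simp_all only: cfun_eq, simp_all)
  qed
  have h5: "measure U01 {\<delta> \<in> {0..<1}. cfun PX \<delta> - cfun PY \<delta> < \<gamma>} = m"
    unfolding m_def by (rule measure_U01) auto
  have h6: "0 \<le> m" unfolding m_def by (rule measure_nonneg)
  have fin0: "vdist PY (map_pmf \<phi> PX) \<le> 2 * (\<epsilon> + m)"
  proof -
    have "vdist PY (map_pmf \<phi> PX) \<le> 2 * measure U01 Ov" using h1 h2 by simp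
    also have "\<dots> \<le> 2 * (\<epsilon> + m)" using h3 unfolding h4 h5 by simp
    finally show ?thesis .
  qed
  have fin: "vdist PY (map_pmf \<phi> PX) \<le> 9 * \<epsilon> + 10 * m"
    using fin0 h6 assms(1) by (rule arith_fin)
  show ?thesis
  proof
    show "vdist PY (map_pmf \<phi> PX)
             \<le> 9 * \<epsilon> + 10 * measure lborel {\<delta> \<in> {0..<1}. cfun PX \<delta> - cfun PY \<delta> < \<gamma>}"
      using fin unfolding m_def .
  qed
qed


end
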